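(* Let $G$ be a topological group, let $\mathcal{Y}$ be a Hausdorff locally convex space, let $n\ge 1$, and let $\phi\in\mathcal{LUC}_{\rm loc}^n(G,\mathcal{Y})$. Then: (1) For all $g\in G$, $X\in\mathfrak{L}(G)$ and $t\in\mathbb{R}$ one can write $$\phi(gX(t))=\sum_{j=0}^n\frac{t^j}{j!}((D^\lambda_X)^j\phi)(g)+t^n\chi_1(g,X,t),$$ where $\chi_1\colon G\times\mathfrak{L}(G)\times\mathbb{R}\to\mathcal{Y}$ is a function with $\lim_{t\to0}\chi_1(g,X,t)=0$. (2) For all $X_1,X_2\in\mathfrak{L}(G)$, $g\in G$, $t\in\mathbb{R}$ one can write $$\phi(gX_1(t)X_2(t))=\phi(g)+t\big((D^\lambda_{X_1}\phi)(g)+(D^\lambda_{X_2}\phi)(g)\big)+t\chi_2(g,X_1,X_2,t),$$ where $\chi_2\colon G\times\mathfrak{L}(G)\times\mathfrak{L}(G)\times\mathbb{R}\to\mathcal{Y}$ is a function with $\lim_{t\to0}\chi_2(g,X_1,X_2,t)=0$. Moreover, for every $g_0\in G$ (and fixed $X$, respectively fixed $X_1,X_2$) there exists a neighborhood $V_0$ of $g_0$ such that both limits $\lim_{t\to0}\chi_1(g,X,t)=0$ and $\lim_{t\to0}\chi_2(g,X_1,X_2,t)=0$ hold uniformly for $g\in V_0$.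
   Context: All topological groups and locally convex spaces are Hausdorff. $\mathfrak{L}(G)$ denotes the set of one-parameter subgroups of $G$, i.e. continuous homomorphisms $X\colon(\mathbb{R},+)\to G$. For $\phi\colon G\to\mathcal{Y}$, $X\in\mathfrak{L}(G)$, $g\in G$, set $(D^\lambda_X\phi)(g)=\lim_{t\to0}\frac{\phi(gX(t))-\phi(g)}{t}$ whenever the limit exists. $\mathcal{LUC}_{\rm loc}(G,\mathcal{Y})$ is the set of all $\phi\colon G\to\mathcal{Y}$ such that every $g_0\in G$ has a neighborhood $V$ on which $\phi$ is left uniformly continuous: for every neighborhood $U$ of $0\in\mathcal{Y}$ there is a neighborhood $W$ of $\mathbf{1}\in G$ such that $x,y\in V$, $x^{-1}y\in W$ imply $\phi(x)-\phi(y)\in U$. $\mathcal{LUC}^1_{\rm loc}(G,\mathcal{Y})$ is the set of $\phi\in\mathcal{LUC}_{\rm loc}(G,\mathcal{Y})$ such that $D^\lambda_X\phi(g)$ exists for all $X\in\mathfrak{L}(G)$, $g\in G$, and $D^\lambda_X\phi\in\mathcal{LUC}_{\rm loc}(G,\mathcal{Y})$ for every $X$; inductively, $\mathcal{LUC}^n_{\rm loc}(G,\mathcal{Y})$ is the set of $\phi\in\mathcal{LUC}^{n-1}_{\rm loc}(G,\mathcal{Y})$ such that all iterated derivatives $D^\lambda_{X_1}(D^\lambda_{X_2}\cdots(D^\lambda_{X_n}\phi)\cdots)$ exist everywhere and belong to $\mathcal{LUC}_{\rm loc}(G,\mathcal{Y})$ for all $X_1,\dots,X_n\in\mathfrak{L}(G)$.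 $(D^\lambda_X)^j$ denotes the $j$-fold iterate, $(D^\lambda_X)^0\phi=\phi$. *)

theory Defs
  imports "HOL-Analysis.Analysis"
begin

text \<open>Topological groups are written additively (the group need not be commutative):
  a Hausdorff topological group is a type of class
  \<open>{topological_group_add, t2_space}\<close>; the product \<open>g X(t)\<close> is \<open>g + X t\<close>
  and \<open>x\<inverse> y\<close> is \<open>- x + y\<close>.\<close>

class locally_convex_space = real_vector + topological_ab_group_add + t2_space +
  assumes scaleR_continuous:
    "\<And>c x U. open U \<Longrightarrow> c *\<^sub>R (x::'a) \<in> U \<Longrightarrow>
       \<exists>A B. open A \<and> c \<in> A \<and> open B \<and> x \<in> B \<and> (\<forall>d\<in>A. \<forall>y\<in>B. d *\<^sub>R y \<in> U)"
  \<comment> \<open>the last conjunct is the unfolded definition of \<open>convex C\<close>\<close>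
  assumes convex_nhds_base:
    "\<And>U. open U \<Longrightarrow> (0::'a) \<in> U \<Longrightarrow> \<exists>C. open C \<and> 0 \<in> C \<and> C \<subseteq> U \<and>
       (\<forall>x\<in>C. \<forall>y\<in>C. \<forall>u\<ge>0. \<forall>v\<ge>0. u + v = 1 \<longrightarrow> u *\<^sub>R x + v *\<^sub>R y \<in> C)"

definition one_param_subgroups :: "(real \<Rightarrow> 'g::topological_group_add) set" where
  "one_param_subgroups = {X. continuous_on UNIV X \<and> (\<forall>s t. X (s + t) = X s + X t)}"

definition has_ldir_deriv ::
    "('g::topological_group_add \<Rightarrow> 'y::locally_convex_space) \<Rightarrow> (real \<Rightarrow> 'g) \<Rightarrow> 'g \<Rightarrow> 'y \<Rightarrow> bool" where
  "has_ldir_deriv \<phi> X g v \<longleftrightarrow>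
     ((\<lambda>t. (1 / t) *\<^sub>R (\<phi> (g + X t) - \<phi> g)) \<longlongrightarrow> v) (at 0)"

definition ldir_deriv ::
    "(real \<Rightarrow> 'g::topological_group_add) \<Rightarrow> ('g \<Rightarrow> 'y::locally_convex_space) \<Rightarrow> 'g \<Rightarrow> 'y" where
  "ldir_deriv X \<phi> g = (THE v. has_ldir_deriv \<phi> X g v)"

fun iter_ldir_deriv ::
    "(real \<Rightarrow> 'g::topological_group_add) list \<Rightarrow> ('g \<Rightarrow> 'y::locally_convex_space) \<Rightarrow> 'g \<Rightarrow> 'y" where
  "iter_ldir_deriv [] \<phi> = \<phi>"
| "iter_ldir_deriv (X # Xs) \<phi> = ldir_deriv X (iter_ldir_deriv Xs \<phi>)"

definition ldir_deriv_pow ::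
    "(real \<Rightarrow> 'g::topological_group_add) \<Rightarrow> nat \<Rightarrow> ('g \<Rightarrow> 'y::locally_convex_space) \<Rightarrow> 'g \<Rightarrow> 'y" where
  "ldir_deriv_pow X j \<phi> = iter_ldir_deriv (replicate j X) \<phi>"

definition LUC_loc :: "('g::topological_group_add \<Rightarrow> 'y::locally_convex_space) set" where
  "LUC_loc = {\<phi>. \<forall>g0. \<exists>V. open V \<and> g0 \<in> V \<and>
      (\<forall>U. open U \<and> 0 \<in> U \<longrightarrow>
        (\<exists>W. open W \<and> 0 \<in> W \<and>
           (\<forall>x\<in>V. \<forall>y\<in>V. - x + y \<in> W \<longrightarrow> \<phi> x - \<phi> y \<in> U)))}"

fun LUCn_loc :: "nat \<Rightarrow> ('g::topological_group_add \<Rightarrow> 'y::locally_convex_space) set" where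
  "LUCn_loc 0 = LUC_loc"
| "LUCn_loc (Suc n) = {\<phi>. \<phi> \<in> LUCn_loc n \<and>
      (\<forall>X Xs. X \<in> one_param_subgroups \<and> set Xs \<subseteq> one_param_subgroups \<and> length Xs = n \<longrightarrow>
         (\<forall>g. \<exists>v. has_ldir_deriv (iter_ldir_deriv Xs \<phi>) X g v) \<and>
         iter_ldir_deriv (X # Xs) \<phi> \<in> LUC_loc)}"

definition uniform_tendsto_zero_on ::
    "'g set \<Rightarrow> ('g \<Rightarrow> real \<Rightarrow> 'y::locally_convex_space) \<Rightarrow> bool" where
  "uniform_tendsto_zero_on V f \<longleftrightarrow>
     (\<forall>U. open U \<and> 0 \<in> U \<longrightarrow>
        (\<exists>\<delta>>0. \<forall>g\<in>V. \<forall>t. t \<noteq> 0 \<and> \<bar>t\<bar> < \<delta> \<longrightarrow> f g t \<in> U))"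

end

theory Submission
  imports Defs
begin

lemma open_scale_pre:
  fixes U :: "'y::locally_convex_space set"
  assumes "open U" shows "open {x. c *\<^sub>R x \<in> U}"
proof (subst open_subopen, intro ballI)
  fix x assume "x \<in> {x. c *\<^sub>R x \<in> U}"
  then have "c *\<^sub>R x \<in> U" by simp
  from scaleR_continuous[OF assms this] obtain A B where "open A" "c \<in> A" "open B" "x \<in> B" "\<forall>d\<in>A. \<forall>y\<in>B. d *\<^sub>R y \<in> U"
    by blast
  then show "\<exists>T. open T \<and> x \<in> T \<and> T \<subseteq> {x. c *\<^sub>R x \<in> U}" by blast
qed

lemma tendsto_scaleR_const_Y:
  fixes c :: "'y::locally_convex_space"
  assumes "(a \<longlongrightarrow> \<alpha>) F"
  shows "((\<lambda>x. a x *\<^sub>R c) \<longlongrightarrow> \<alpha> *\<^sub>R c) F"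
  unfolding tendsto_def
proof (intro allI impI)
  fix U :: "'y set" assume U0: "open U" "\<alpha> *\<^sub>R c \<in> U"
  then have U: "open U \<and> \<alpha> *\<^sub>R c \<in> U" by simp
  from scaleR_continuous[of U \<alpha> c] U obtain A B where "open A" "\<alpha> \<in> A" "open B" "c \<in> B" and *: "\<forall>d\<in>A. \<forall>y\<in>B. d *\<^sub>R y \<in> U"
    by blast
  have "eventually (\<lambda>x. a x \<in> A) F" using assms \<open>open A\<close> \<open>\<alpha> \<in> A\<close> unfolding tendsto_def by blast
  then show "eventually (\<lambda>x. a x *\<^sub>R c \<in> U) F"
  proof (rule eventually_mono)
    fix x assume "a x \<in> A"
    then show "a x *\<^sub>R c \<in> U" using * \<open>c \<in> B\<close> by blast
  qed
qed

definition vderiv :: "(real \<Rightarrow> 'y::locally_convex_space) \<Rightarrow> 'y \<Rightarrow> real \<Rightarrow> bool" where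
  "vderiv f v s \<longleftrightarrow> ((\<lambda>h. (1/h) *\<^sub>R (f (s+h) - f s)) \<longlongrightarrow> v) (at 0)"

lemma vderiv_diff:
  assumes "vderiv f v s" "vderiv g w s"
  shows "vderiv (\<lambda>x. f x - g x) (v - w) s"
  using tendsto_diff[OF assms[unfolded vderiv_def]] unfolding vderiv_def
  by (simp add: algebra_simps)

lemma vderiv_sum:
  assumes "\<And>i. i \<in> I \<Longrightarrow> vderiv (f i) (v i) s"
  shows "vderiv (\<lambda>x. \<Sum>i\<in>I. f i x) (\<Sum>i\<in>I. v i) s"
proof -
  have "((\<lambda>h. \<Sum>i\<in>I. (1/h) *\<^sub>R (f i (s+h) - f i s)) \<longlongrightarrow> (\<Sum>i\<in>I. v i)) (at 0)"
    by (rule tendsto_sum) (use assms in \<open>auto simp: vderiv_def\<close>)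
  then show ?thesis unfolding vderiv_def
    by (simp add: sum_subtractf[symmetric] scaleR_sum_right)
qed

lemma vderiv_monom:
  fixes c :: "'y::locally_convex_space"
  shows "vderiv (\<lambda>x. (x ^ j / fact j) *\<^sub>R c) ((of_nat j * s ^ (j - 1) / fact j) *\<^sub>R c) s"
proof -
  have "DERIV (\<lambda>x. x ^ j / fact j) s :> (of_nat j * s ^ (j - 1) / fact j)"
    by (auto intro!: derivative_eq_intros)
  then have "((\<lambda>h. ((s + h) ^ j / fact j - s ^ j / fact j) / h) \<longlongrightarrow> of_nat j * s ^ (j - 1) / fact j) (at 0)"
    by (simp add: DERIV_def)
  from tendsto_scaleR_const_Y[OF this, of c]
  show ?thesis unfolding vderiv_def
    by (simp add: scaleR_diff_left[symmetric] divide_inverse mult.commute)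
qed

lemma convex_comb2:
  fixes x y :: "'y::real_vector"
  assumes "convex K" "a > 0" "b > 0" "(1/a) *\<^sub>R x \<in> K" "(1/b) *\<^sub>R y \<in> K"
  shows "(1/(a+b)) *\<^sub>R (x + y) \<in> K"
proof -
  have "(a/(a+b)) *\<^sub>R ((1/a) *\<^sub>R x) + (b/(a+b)) *\<^sub>R ((1/b) *\<^sub>R y) \<in> K"
    by (rule convexD[OF assms(1,4,5)]) (use assms(2,3) in \<open>auto simp: add_divide_distrib[symmetric]\<close>)
  moreover have "(a/(a+b)) *\<^sub>R ((1/a) *\<^sub>R x) + (b/(a+b)) *\<^sub>R ((1/b) *\<^sub>R y) = (1/(a+b)) *\<^sub>R (x + y)"
    using assms by (simp add: scaleR_add_right)
  ultimately show ?thesis by simp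
qed

lemma vderiv_eventually:
  assumes "vderiv f v s" "open K" "v \<in> K"
  shows "\<exists>d>0. \<forall>h. h \<noteq> 0 \<and> \<bar>h\<bar> < d \<longrightarrow> (1/h) *\<^sub>R (f (s+h) - f s) \<in> K"
proof -
  have "eventually (\<lambda>h. (1/h) *\<^sub>R (f (s+h) - f s) \<in> K) (at (0::real))"
    using assms unfolding vderiv_def tendsto_def by blast
  then show ?thesis unfolding eventually_at by (auto simp: dist_real_def)
qed

lemma mvt_pos:
  fixes f :: "real \<Rightarrow> 'y::locally_convex_space"
  assumes T: "0 < T" and K: "convex K" "open K"
    and D: "\<forall>s. 0 \<le> s \<and> s \<le> T \<longrightarrow> (\<exists>v\<in>K. vderiv f v s)"
  shows "(1/T) *\<^sub>R (f T - f 0) \<in> K"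
proof -
  have Q: "\<exists>d>0. \<forall>h. h \<noteq> 0 \<and> \<bar>h\<bar> < d \<longrightarrow> (1/h) *\<^sub>R (f (s+h) - f s) \<in> K"
    if "0 \<le> s" "s \<le> T" for s
    using D that K vderiv_eventually by blast
  define P where "P u \<longleftrightarrow> (1/u) *\<^sub>R (f u - f 0) \<in> K" for u
  define A where "A = {s. 0 \<le> s \<and> s \<le> T \<and> (\<forall>u. 0 < u \<and> u \<le> s \<longrightarrow> P u)}"
  define \<sigma> where "\<sigma> = Sup A"
  have "0 \<in> A" using T by (auto simp: A_def)
  have bdd: "bdd_above A" by (auto simp: A_def bdd_above_def)
  have s0: "0 \<le> \<sigma>" unfolding \<sigma>_def using cSup_upper[OF \<open>0 \<in> A\<close> bdd] .
  have sT: "\<sigma> \<le> T" unfolding \<sigma>_def by (rule cSup_least) (use \<open>0 \<in> A\<close> in \<open>auto simp: A_def\<close>)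
  have C1: "P u" if "0 < u" "u < \<sigma>" for u
  proof -
    have "u < Sup A" using that by (simp add: \<sigma>_def)
    then obtain s where "s \<in> A" "u < s" using less_cSup_iff[OF _ bdd, of u] \<open>0 \<in> A\<close> by blast
    then show ?thesis using that by (auto simp: A_def)
  qed
  have C2: "P \<sigma>" if "0 < \<sigma>"
  proof -
    obtain d where d: "d > 0" "\<forall>h. h \<noteq> 0 \<and> \<bar>h\<bar> < d \<longrightarrow> (1/h) *\<^sub>R (f (\<sigma>+h) - f \<sigma>) \<in> K"
      using Q[OF s0 sT] by blast
    define h where "h = min (d/2) (\<sigma>/2)"
    have h: "0 < h" "h < d" "h < \<sigma>" using d that by (auto simp: h_def)
    have "(1/(-h)) *\<^sub>R (f (\<sigma> + -h) - f \<sigma>) \<in> K" using d(2)[rule_format, of "-h"] h by auto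
    also have "(1/(-h)) *\<^sub>R (f (\<sigma> + -h) - f \<sigma>) = (1/h) *\<^sub>R (f \<sigma> - f (\<sigma> - h))"
      by (simp add: scaleR_diff_right)
    finally have a: "(1/h) *\<^sub>R (f \<sigma> - f (\<sigma> - h)) \<in> K" .
    have b: "P (\<sigma> - h)" using C1 h by auto
    have "(1/((\<sigma>-h)+h)) *\<^sub>R ((f (\<sigma> - h) - f 0) + (f \<sigma> - f (\<sigma> - h))) \<in> K"
      by (rule convex_comb2[OF K(1)]) (use h a b in \<open>auto simp: P_def\<close>)
    then show ?thesis by (simp add: P_def)
  qed
  have sA: "\<sigma> \<in> A" unfolding A_def
  proof (intro CollectI conjI allI impI)
    show "0 \<le> \<sigma>" "\<sigma> \<le> T" using s0 sT by auto
    fix u assume u: "0 < u \<and> u \<le> \<sigma>"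
    show "P u"
    proof (cases "u = \<sigma>")
      case True then show ?thesis using C2 u by simp
    next
      case False then show ?thesis using C1 u by simp
    qed
  qed
  have "\<sigma> = T"
  proof (rule ccontr)
    assume "\<sigma> \<noteq> T" then have lt: "\<sigma> < T" using sT by simp
    obtain d where d: "d > 0" "\<forall>h. h \<noteq> 0 \<and> \<bar>h\<bar> < d \<longrightarrow> (1/h) *\<^sub>R (f (\<sigma>+h) - f \<sigma>) \<in> K"
      using Q[OF s0 sT] by blast
    define s' where "s' = min (\<sigma> + d/2) T"
    have s': "\<sigma> < s'" "s' \<le> T" "s' < \<sigma> + d" using lt d by (auto simp: s'_def)
    have "s' \<in> A" unfolding A_def
    proof (intro CollectI conjI allI impI)
      show "0 \<le> s'" "s' \<le> T" using s' s0 by auto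
      fix u assume u: "0 < u \<and> u \<le> s'"
      show "P u"
      proof (cases "u \<le> \<sigma>")
        case True then show ?thesis using sA u by (auto simp: A_def)
      next
        case False
        define h where "h = u - \<sigma>"
        have h: "0 < h" "h < d" using False u s' by (auto simp: h_def)
        have a: "(1/h) *\<^sub>R (f u - f \<sigma>) \<in> K" using d(2)[rule_format, of h] h by (auto simp: h_def)
        show ?thesis
        proof (cases "\<sigma> = 0")
          case True then show ?thesis using a by (simp add: P_def h_def)
        next
          case False
          then have "0 < \<sigma>" using s0 by simp
          have "(1/(\<sigma>+h)) *\<^sub>R ((f \<sigma> - f 0) + (f u - f \<sigma>)) \<in> K"
            by (rule convex_comb2[OF K(1)]) (use h a C2 \<open>0 < \<sigma>\<close> in \<open>auto simp: P_def\<close>)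
          then show ?thesis by (simp add: P_def h_def)
        qed
      qed
    qed
    then have "s' \<le> \<sigma>" unfolding \<sigma>_def using cSup_upper[OF _ bdd] by blast
    then show False using s' by simp
  qed
  then show ?thesis using sA T by (auto simp: A_def P_def)
qed

lemma convex_scale_pre:
  fixes D :: "'y::real_vector set"
  assumes "convex D" shows "convex {x. c *\<^sub>R x \<in> D}"
  unfolding convex_def
proof (intro ballI allI impI)
  fix x y u v assume xy: "x \<in> {x. c *\<^sub>R x \<in> D}" "y \<in> {x. c *\<^sub>R x \<in> D}" and uv: "0 \<le> (u::real)" "0 \<le> (v::real)" "u + v = 1"
  have m: "u *\<^sub>R (c *\<^sub>R x) + v *\<^sub>R (c *\<^sub>R y) \<in> D"
    using convexD[OF assms, of "c *\<^sub>R x" "c *\<^sub>R y" u v] xy uv by blast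
  have eq: "c *\<^sub>R (u *\<^sub>R x + v *\<^sub>R y) = u *\<^sub>R (c *\<^sub>R x) + v *\<^sub>R (c *\<^sub>R y)" by (simp add: algebra_simps)
  show "u *\<^sub>R x + v *\<^sub>R y \<in> {x. c *\<^sub>R x \<in> D}" unfolding mem_Collect_eq eq by (rule m)
qed

lemma star_convex0:
  fixes D :: "'y::real_vector set"
  assumes "convex D" "0 \<in> D" "x \<in> D" "0 \<le> c" "c \<le> 1"
  shows "c *\<^sub>R x \<in> D"
proof -
  have "c *\<^sub>R x + (1 - c) *\<^sub>R 0 \<in> D"
    using convexD[OF assms(1) assms(3) assms(2), of c "1 - c"] assms(4,5) by auto
  then show ?thesis by simp
qed

lemma vderiv_reflect:
  assumes "vderiv f v (-s)"
  shows "vderiv (\<lambda>x. f (-x)) (-v) s"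
proof -
  have lim: "filterlim (\<lambda>h::real. -h) (at 0) (at 0)"
    unfolding filterlim_def using filtermap_at_minus[of "0::real"] by simp
  have "((\<lambda>h. (1/(-h)) *\<^sub>R (f (-s + -h) - f (-s))) \<longlongrightarrow> v) (at 0)"
    using filterlim_compose[OF assms[unfolded vderiv_def] lim] by simp
  from tendsto_minus[OF this] show ?thesis unfolding vderiv_def
    by (simp add: algebra_simps)
qed

lemma mvt:
  fixes f :: "real \<Rightarrow> 'y::locally_convex_space"
  assumes t: "t \<noteq> 0" and K: "convex K" "open K"
    and D: "\<forall>s. (0 \<le> s \<and> s \<le> t) \<or> (t \<le> s \<and> s \<le> 0) \<longrightarrow> (\<exists>v\<in>K. vderiv f v s)"
  shows "(1/t) *\<^sub>R (f t - f 0) \<in> K"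
proof (cases "t > 0")
  case True then show ?thesis using mvt_pos[OF True K] D by auto
next
  case False
  then have T: "0 < -t" using t by simp
  let ?K = "{x. (-1::real) *\<^sub>R x \<in> K}"
  have "(1/(-t)) *\<^sub>R ((\<lambda>x. f (-x)) (-t) - (\<lambda>x. f (-x)) 0) \<in> ?K"
  proof (rule mvt_pos[OF T convex_scale_pre[OF K(1)] open_scale_pre[OF K(2)]], intro allI impI)
    fix s assume "0 \<le> s \<and> s \<le> - t"
    then have "t \<le> -s \<and> -s \<le> 0" by linarith
    then obtain v where "v \<in> K" "vderiv f v (-s)" using D by blast
    then show "\<exists>v\<in>?K. vderiv (\<lambda>x. f (- x)) v s"
      using vderiv_reflect[of f v s] by (intro bexI[of _ "-v"]) auto
  qed
  then show ?thesis by (simp add: scaleR_diff_right)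
qed

lemma sum_zero_eval:
  "(\<Sum>j\<le>m. ((0::real) ^ j / fact j) *\<^sub>R a j) = (a 0 :: 'y::real_vector)"
  by (induction m) auto

lemma fact_ratio: "real (Suc j) * s ^ j / fact (Suc j) = s ^ j / fact j"
  by (simp add: fact_Suc)

lemma taylor_core:
  fixes F :: "nat \<Rightarrow> real \<Rightarrow> 'y::locally_convex_space"
  assumes "\<forall>j<n. \<forall>s. \<bar>s\<bar> < \<delta> \<longrightarrow> vderiv (F j) (F (Suc j) s) s"
    and "\<forall>s. \<bar>s\<bar> < \<delta> \<longrightarrow> F n s - F n 0 \<in> D"
    and D: "open D" "convex D" "0 \<in> D"
  shows "\<forall>t. t \<noteq> 0 \<and> \<bar>t\<bar> < \<delta> \<longrightarrow> (1/t^n) *\<^sub>R (F 0 t - (\<Sum>j\<le>n. (t^j/fact j) *\<^sub>R F j 0)) \<in> D"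
  using assms(1,2)
proof (induction n arbitrary: F)
  case 0
  then show ?case by auto
next
  case (Suc n)
  define q where "q s = F 1 s - (\<Sum>j\<le>n. (s^j/fact j) *\<^sub>R F (Suc j) 0)" for s
  define r where "r s = F 0 s - (\<Sum>j\<le>Suc n. (s^j/fact j) *\<^sub>R F j 0)" for s
  have IH: "\<forall>s. s \<noteq> 0 \<and> \<bar>s\<bar> < \<delta> \<longrightarrow> (1/s^n) *\<^sub>R q s \<in> D"
    using Suc.IH[where F="\<lambda>j. F (Suc j)"] Suc.prems unfolding q_def by auto
  have q0: "q 0 = 0" unfolding q_def using sum_zero_eval[where m=n and a="\<lambda>j. F (Suc j) 0"] by simp
  have r0: "r 0 = 0" unfolding r_def using sum_zero_eval[where m="Suc n" and a="\<lambda>j. F j 0"] by simp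
  have dr: "vderiv r (q s) s" if "\<bar>s\<bar> < \<delta>" for s
  proof -
    have d0: "vderiv (F 0) (F 1 s) s" using Suc.prems(1) that by simp
    have "vderiv r (F 1 s - (\<Sum>j\<le>Suc n. (real j * s ^ (j - 1) / fact j) *\<^sub>R F j 0)) s"
      unfolding r_def by (rule vderiv_diff[OF d0 vderiv_sum[OF vderiv_monom]])
    moreover have "(\<Sum>j\<le>Suc n. (real j * s ^ (j - 1) / fact j) *\<^sub>R F j 0)
        = (\<Sum>j\<le>n. (s^j/fact j) *\<^sub>R F (Suc j) 0)"
      by (subst sum.atMost_Suc_shift) (simp only: fact_ratio diff_Suc_1, simp)
    ultimately show ?thesis unfolding q_def by simp
  qed
  show ?case
  proof (intro allI impI)
    fix t :: real assume t: "t \<noteq> 0 \<and> \<bar>t\<bar> < \<delta>"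
    let ?K = "{x. (1/t^n) *\<^sub>R x \<in> D}"
    have "(1/t) *\<^sub>R (r t - r 0) \<in> ?K"
    proof (rule mvt[OF _ convex_scale_pre[OF D(2)] open_scale_pre[OF D(1)]], use t in simp, intro allI impI)
      fix s assume s: "(0 \<le> s \<and> s \<le> t) \<or> (t \<le> s \<and> s \<le> 0)"
      then have sd: "\<bar>s\<bar> < \<delta>" using t by auto
      have "q s \<in> ?K"
      proof (cases "s = 0")
        case True then show ?thesis using q0 D by simp
      next
        case False
        have c: "0 \<le> (s/t)^n" "(s/t)^n \<le> 1"
        proof -
          have "0 < s/t" using s t False by (auto simp: zero_less_divide_iff)
          moreover have "s/t \<le> 1" using s t by (auto simp: divide_le_eq)
          ultimately show "0 \<le> (s/t)^n" "(s/t)^n \<le> 1" by (auto intro: power_le_one)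
        qed
        have m: "(s/t)^n *\<^sub>R ((1/s^n) *\<^sub>R q s) \<in> D"
          by (rule star_convex0[OF D(2,3)]) (use IH False sd c in auto)
        have eq: "(s/t)^n *\<^sub>R ((1/s^n) *\<^sub>R q s) = (1/t^n) *\<^sub>R q s"
        proof -
          have e: "(s/t)^n * (1/s^n) = 1/t^n" using False by (simp add: power_divide)
          show ?thesis by (simp only: scaleR_scaleR e)
        qed
        show ?thesis using m unfolding eq by simp
      qed
      then show "\<exists>v\<in>?K. vderiv r v s" using dr[OF sd] by blast
    qed
    then have m2: "(1/t^n) *\<^sub>R ((1/t) *\<^sub>R r t) \<in> D" using r0 by simp
    have sc: "(1/t^n) * (1/t) = 1/t^Suc n" by (simp add: mult.commute)
    have eq: "(1/t^n) *\<^sub>R ((1/t) *\<^sub>R r t) = (1/t^Suc n) *\<^sub>R r t"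
      using sc by (simp only: scaleR_scaleR)
    show "(1/t^Suc n) *\<^sub>R (F 0 t - (\<Sum>j\<le>Suc n. (t^j/fact j) *\<^sub>R F j 0)) \<in> D"
      using m2[unfolded eq] unfolding r_def .
  qed
qed

lemma LUCn_mono: "m \<le> n \<Longrightarrow> \<phi> \<in> LUCn_loc n \<Longrightarrow> \<phi> \<in> LUCn_loc m"
proof (induction n)
  case 0 then show ?case by simp
next
  case (Suc n)
  show ?case
  proof (cases "m = Suc n")
    case True then show ?thesis using Suc.prems by simp
  next
    case False then have "m \<le> n" using Suc.prems by simp
    moreover have "\<phi> \<in> LUCn_loc n" using Suc.prems(2) by simp
    ultimately show ?thesis using Suc.IH by blast
  qed
qed

lemma ldir_deriv_unique:
  assumes "has_ldir_deriv \<psi> X g v" shows "ldir_deriv X \<psi> g = v"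
  unfolding ldir_deriv_def
proof (rule the_equality)
  show "has_ldir_deriv \<psi> X g v" by fact
  fix w assume "has_ldir_deriv \<psi> X g w"
  then show "w = v" using assms unfolding has_ldir_deriv_def
    using tendsto_unique[OF at_neq_bot] by blast
qed

lemma ldir_deriv_pow_0 [simp]: "ldir_deriv_pow X 0 \<phi> = \<phi>"
  by (simp add: ldir_deriv_pow_def)

lemma ldir_deriv_pow_1 [simp]: "ldir_deriv_pow X (Suc 0) \<phi> = ldir_deriv X \<phi>"
  by (simp add: ldir_deriv_pow_def)

lemma LUCn_Suc_D:
  assumes "\<phi> \<in> LUCn_loc (Suc j)" "X \<in> one_param_subgroups"
  shows "(\<forall>g. \<exists>v. has_ldir_deriv (ldir_deriv_pow X j \<phi>) X g v) \<and> ldir_deriv_pow X (Suc j) \<phi> \<in> LUC_loc"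
proof -
  have H: "\<forall>X Xs. X \<in> one_param_subgroups \<and> set Xs \<subseteq> one_param_subgroups \<and> length Xs = j \<longrightarrow>
         (\<forall>g. \<exists>v. has_ldir_deriv (iter_ldir_deriv Xs \<phi>) X g v) \<and>
         iter_ldir_deriv (X # Xs) \<phi> \<in> LUC_loc" using assms(1) by simp
  have "set (replicate j X) \<subseteq> one_param_subgroups" using assms(2) by auto
  then show ?thesis using H[rule_format, of X "replicate j X"] assms(2)
    by (simp add: ldir_deriv_pow_def)
qed

lemma LUCn_deriv:
  assumes "\<phi> \<in> LUCn_loc n" "j < n" "X \<in> one_param_subgroups"
  shows "has_ldir_deriv (ldir_deriv_pow X j \<phi>) X g (ldir_deriv_pow X (Suc j) \<phi> g)"
proof -
  have "\<phi> \<in> LUCn_loc (Suc j)" using LUCn_mono[of "Suc j" n] assms by simp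
  from LUCn_Suc_D[OF this assms(3)] obtain v where v: "has_ldir_deriv (ldir_deriv_pow X j \<phi>) X g v" by blast
  have "ldir_deriv_pow X (Suc j) \<phi> g = ldir_deriv X (ldir_deriv_pow X j \<phi>) g"
    by (simp add: ldir_deriv_pow_def)
  also have "\<dots> = v" using ldir_deriv_unique[OF v] .
  finally show ?thesis using v by simp
qed

lemma LUCn_LUC:
  assumes "\<phi> \<in> LUCn_loc n" "j \<le> n" "X \<in> one_param_subgroups"
  shows "ldir_deriv_pow X j \<phi> \<in> LUC_loc"
proof (cases j)
  case 0
  then show ?thesis using LUCn_mono[of 0 n \<phi>] assms by simp
next
  case (Suc k)
  then have "\<phi> \<in> LUCn_loc (Suc k)" using LUCn_mono[of "Suc k" n] assms by simp
  from LUCn_Suc_D[OF this assms(3)] show ?thesis using Suc by simp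
qed

lemma LUC_shift:
  fixes \<psi> :: "'g::topological_group_add \<Rightarrow> 'y::locally_convex_space"
  assumes "\<psi> \<in> LUC_loc"
  shows "\<exists>V. open V \<and> g0 \<in> V \<and> (\<forall>U. open U \<and> 0 \<in> U \<longrightarrow>
    (\<exists>W. open W \<and> 0 \<in> W \<and> (\<forall>x\<in>V. \<forall>w\<in>W. x + w \<in> V \<longrightarrow> \<psi> (x + w) - \<psi> x \<in> U)))"
proof -
  obtain V where V: "open V" "g0 \<in> V" and L: "\<forall>U. open U \<and> 0 \<in> U \<longrightarrow>
        (\<exists>W. open W \<and> 0 \<in> W \<and> (\<forall>x\<in>V. \<forall>y\<in>V. - x + y \<in> W \<longrightarrow> \<psi> x - \<psi> y \<in> U))"
    using assms unfolding LUC_loc_def by blast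
  have "\<forall>U. open U \<and> 0 \<in> U \<longrightarrow> (\<exists>W. open W \<and> 0 \<in> W \<and> (\<forall>x\<in>V. \<forall>w\<in>W. x + w \<in> V \<longrightarrow> \<psi> (x + w) - \<psi> x \<in> U))"
  proof (intro allI impI)
    fix U :: "'y set" assume U: "open U \<and> 0 \<in> U"
    have "open {x. (-1::real) *\<^sub>R x \<in> U} \<and> 0 \<in> {x. (-1::real) *\<^sub>R x \<in> U}"
      using open_scale_pre[of U "-1"] U by simp
    then obtain W where W: "open W" "0 \<in> W" and WW: "\<forall>x\<in>V. \<forall>y\<in>V. - x + y \<in> W \<longrightarrow> \<psi> x - \<psi> y \<in> {x. (-1::real) *\<^sub>R x \<in> U}"
      using L by blast
    have "\<forall>x\<in>V. \<forall>w\<in>W. x + w \<in> V \<longrightarrow> \<psi> (x + w) - \<psi> x \<in> U"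
    proof (intro ballI impI)
      fix x w assume "x \<in> V" "w \<in> W" "x + w \<in> V"
      moreover have "- x + (x + w) = w" by (simp add: add.assoc[symmetric])
      ultimately have "\<psi> x - \<psi> (x + w) \<in> {x. (-1::real) *\<^sub>R x \<in> U}" using WW by metis
      then show "\<psi> (x + w) - \<psi> x \<in> U" by simp
    qed
    then show "\<exists>W. open W \<and> 0 \<in> W \<and> (\<forall>x\<in>V. \<forall>w\<in>W. x + w \<in> V \<longrightarrow> \<psi> (x + w) - \<psi> x \<in> U)"
      using W by blast
  qed
  then show ?thesis using V by blast
qed

lemma ops_zero: "X \<in> one_param_subgroups \<Longrightarrow> X 0 = 0"
proof -
  assume "X \<in> one_param_subgroups"
  then have "X (0 + 0) = X 0 + X 0" unfolding one_param_subgroups_def by blast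
  then have "X 0 + X 0 = X 0 + 0" by simp
  then show "X 0 = 0" by (rule add_left_imp_eq)
qed

lemma ops_add: "X \<in> one_param_subgroups \<Longrightarrow> X (s + t) = X s + X t"
  unfolding one_param_subgroups_def by blast

lemma shift_nbhd:
  fixes X :: "real \<Rightarrow> 'g::topological_group_add"
  assumes X: "X \<in> one_param_subgroups" and V: "open V" "g0 \<in> V"
  shows "\<exists>A \<delta>. open A \<and> g0 \<in> A \<and> A \<subseteq> V \<and> \<delta> > 0 \<and> (\<forall>g\<in>A. \<forall>s. \<bar>s\<bar> < \<delta> \<longrightarrow> g + X s \<in> V)"
proof -
  have Xc: "continuous_on UNIV X" using X unfolding one_param_subgroups_def by blast
  have c: "continuous_on UNIV (\<lambda>p::'g\<times>real. fst p + X (snd p))"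
    by (intro continuous_intros continuous_on_compose2[OF Xc]) auto
  have o: "open (UNIV \<inter> (\<lambda>p::'g\<times>real. fst p + X (snd p)) -` V)"
    using continuous_on_open_vimage[OF open_UNIV, of "\<lambda>p::'g\<times>real. fst p + X (snd p)"] c V(1)
    by (simp add: Int_commute)
  have "(g0, 0) \<in> UNIV \<inter> (\<lambda>p::'g\<times>real. fst p + X (snd p)) -` V"
    using V ops_zero[OF X] by simp
  then obtain A B where AB: "open A" "open B" "(g0, 0) \<in> A \<times> B" "A \<times> B \<subseteq> UNIV \<inter> (\<lambda>p::'g\<times>real. fst p + X (snd p)) -` V"
    by (rule open_prod_elim[OF o])
  have "0 \<in> B" using AB(3) by simp
  then obtain e where e: "e > 0" "ball 0 e \<subseteq> B" using AB(2) unfolding open_contains_ball by blast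
  show ?thesis
  proof (intro exI conjI)
    show "open (A \<inter> V)" using AB V by auto
    show "g0 \<in> A \<inter> V" using AB V by auto
    show "A \<inter> V \<subseteq> V" by auto
    show "e > 0" by fact
    show "\<forall>g\<in>A \<inter> V. \<forall>s. \<bar>s\<bar> < e \<longrightarrow> g + X s \<in> V"
    proof (intro ballI allI impI)
      fix g s assume "g \<in> A \<inter> V" "\<bar>s\<bar> < e"
      then have "(g, s) \<in> A \<times> B" using e by (auto simp: dist_real_def)
      then show "g + X s \<in> V" using AB(4) by auto
    qed
  qed
qed

lemma small_in:
  fixes X :: "real \<Rightarrow> 'g::topological_group_add"
  assumes X: "X \<in> one_param_subgroups" and W: "open W" "0 \<in> W"
  shows "\<exists>\<delta>>0. \<forall>s. \<bar>s\<bar> < \<delta> \<longrightarrow> X s \<in> W"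
proof -
  obtain A \<delta> where "open A" "0 \<in> A" "\<delta> > 0" "\<forall>g\<in>A. \<forall>s. \<bar>s\<bar> < \<delta> \<longrightarrow> g + X s \<in> W"
    using shift_nbhd[OF X W] by blast
  then show ?thesis by (metis add_0)
qed

lemma curve_deriv:
  assumes X: "X \<in> one_param_subgroups" and d: "\<forall>h. has_ldir_deriv \<psi> X h (\<psi>' h)"
  shows "vderiv (\<lambda>s. \<psi> (g + X s)) (\<psi>' (g + X s)) s"
proof -
  have e: "g + X (s + h) = (g + X s) + X h" for h
    using ops_add[OF X] by (simp add: add.assoc)
  show ?thesis using d[rule_format, of "g + X s"] unfolding has_ldir_deriv_def vderiv_def e .
qed

lemma unif_tendsto:
  fixes f :: "'g \<Rightarrow> real \<Rightarrow> 'y::locally_convex_space"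
  assumes "uniform_tendsto_zero_on V f" "g \<in> V"
  shows "(f g \<longlongrightarrow> 0) (at 0)"
  unfolding tendsto_def
proof (intro allI impI)
  fix S :: "'y set" assume "open S" "0 \<in> S"
  then have "open S \<and> 0 \<in> S" by simp
  then obtain \<delta> where "\<delta> > 0" "\<forall>g\<in>V. \<forall>t. t \<noteq> 0 \<and> \<bar>t\<bar> < \<delta> \<longrightarrow> f g t \<in> S"
    using assms(1) unfolding uniform_tendsto_zero_on_def by blast
  then show "eventually (\<lambda>t. f g t \<in> S) (at 0)"
    unfolding eventually_at using assms(2) by (auto simp: dist_real_def)
qed

lemma unif_mono:
  fixes f :: "'g \<Rightarrow> real \<Rightarrow> 'y::locally_convex_space"
  assumes "uniform_tendsto_zero_on V f" "V' \<subseteq> V"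
  shows "uniform_tendsto_zero_on V' f"
  unfolding uniform_tendsto_zero_on_def
proof (intro allI impI)
  fix U :: "'y set" assume U: "open U \<and> 0 \<in> U"
  obtain \<delta> where "\<delta> > 0" "\<forall>g\<in>V. \<forall>t. t \<noteq> 0 \<and> \<bar>t\<bar> < \<delta> \<longrightarrow> f g t \<in> U"
    using assms(1)[unfolded uniform_tendsto_zero_on_def, rule_format, OF U] by blast
  then show "\<exists>\<delta>>0. \<forall>g\<in>V'. \<forall>t. t \<noteq> 0 \<and> \<bar>t\<bar> < \<delta> \<longrightarrow> f g t \<in> U"
    using assms(2) by blast
qed

lemma convex_nbhd:
  fixes U :: "'y::locally_convex_space set"
  assumes "open U" "0 \<in> U"
  obtains D where "open D" "0 \<in> D" "D \<subseteq> U" "convex D"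
  using convex_nhds_base[OF assms] unfolding convex_def by blast

lemma first_order:
  fixes \<psi> :: "'g::topological_group_add \<Rightarrow> 'y::locally_convex_space"
  assumes X: "X \<in> one_param_subgroups" and d: "\<forall>h. has_ldir_deriv \<psi> X h (\<psi>' h)"
    and D: "open D" "convex D" "0 \<in> D"
    and c: "\<forall>s. \<bar>s\<bar> < \<delta> \<longrightarrow> \<psi>' (h + X s) - \<psi>' h \<in> D"
    and t: "t \<noteq> 0" "\<bar>t\<bar> < \<delta>"
  shows "(1/t) *\<^sub>R (\<psi> (h + X t) - \<psi> h) - \<psi>' h \<in> D"
proof -
  define F where "F = (\<lambda>j::nat. if j = 0 then (\<lambda>s. \<psi> (h + X s)) else (\<lambda>s. \<psi>' (h + X s)))"
  have h1: "\<forall>j<Suc 0. \<forall>s. \<bar>s\<bar> < \<delta> \<longrightarrow> vderiv (F j) (F (Suc j) s) s"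
    using curve_deriv[OF X d] by (simp add: F_def)
  have h2: "\<forall>s. \<bar>s\<bar> < \<delta> \<longrightarrow> F (Suc 0) s - F (Suc 0) 0 \<in> D"
    using c by (simp add: F_def ops_zero[OF X])
  have "(1/t^Suc 0) *\<^sub>R (F 0 t - (\<Sum>j\<le>Suc 0. (t^j/fact j) *\<^sub>R F j 0)) \<in> D"
    using taylor_core[OF h1 h2 D] t by blast
  then have "(1/t) *\<^sub>R (\<psi> (h + X t) - (\<psi> h + t *\<^sub>R \<psi>' h)) \<in> D"
    by (simp add: F_def ops_zero[OF X])
  moreover have "(1/t) *\<^sub>R (\<psi> (h + X t) - (\<psi> h + t *\<^sub>R \<psi>' h)) = (1/t) *\<^sub>R (\<psi> (h + X t) - \<psi> h) - \<psi>' h"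
    using t by (simp add: scaleR_diff_right scaleR_add_right)
  ultimately show ?thesis by simp
qed

lemma U1:
  fixes \<phi> :: "'g::topological_group_add \<Rightarrow> 'y::locally_convex_space"
  assumes \<phi>: "\<phi> \<in> LUCn_loc n" and X: "X \<in> one_param_subgroups"
  shows "\<exists>V0. open V0 \<and> g0 \<in> V0 \<and> uniform_tendsto_zero_on V0
     (\<lambda>g t. (1/t^n) *\<^sub>R (\<phi> (g + X t) - (\<Sum>j\<le>n. (t ^ j / fact j) *\<^sub>R ldir_deriv_pow X j \<phi> g)))"
proof -
  have "ldir_deriv_pow X n \<phi> \<in> LUC_loc" by (rule LUCn_LUC[OF \<phi> order.refl X])
  from LUC_shift[OF this, of g0] obtain V where V: "open V" "g0 \<in> V" and LV: "\<forall>U. open U \<and> 0 \<in> U \<longrightarrow>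
    (\<exists>W. open W \<and> 0 \<in> W \<and> (\<forall>x\<in>V. \<forall>w\<in>W. x + w \<in> V \<longrightarrow> ldir_deriv_pow X n \<phi> (x + w) - ldir_deriv_pow X n \<phi> x \<in> U))"
    by blast
  obtain A \<delta>0 where A: "open A" "g0 \<in> A" "A \<subseteq> V" "\<delta>0 > 0" "\<forall>g\<in>A. \<forall>s. \<bar>s\<bar> < \<delta>0 \<longrightarrow> g + X s \<in> V"
    using shift_nbhd[OF X V] by blast
  have "uniform_tendsto_zero_on A
     (\<lambda>g t. (1/t^n) *\<^sub>R (\<phi> (g + X t) - (\<Sum>j\<le>n. (t ^ j / fact j) *\<^sub>R ldir_deriv_pow X j \<phi> g)))"
    unfolding uniform_tendsto_zero_on_def
  proof (intro allI impI)
    fix U :: "'y set" assume U: "open U \<and> 0 \<in> U"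
    have "open U" "0 \<in> U" using U by auto
    then obtain D where D: "open D" "0 \<in> D" "D \<subseteq> U" "convex D" by (rule convex_nbhd)
    obtain W where W: "open W" "0 \<in> W" "\<forall>x\<in>V. \<forall>w\<in>W. x + w \<in> V \<longrightarrow> ldir_deriv_pow X n \<phi> (x + w) - ldir_deriv_pow X n \<phi> x \<in> D"
      using LV[rule_format, of D] D by blast
    obtain \<delta>W where \<delta>W: "\<delta>W > 0" "\<forall>s. \<bar>s\<bar> < \<delta>W \<longrightarrow> X s \<in> W" using small_in[OF X W(1,2)] by blast
    show "\<exists>\<delta>>0. \<forall>g\<in>A. \<forall>t. t \<noteq> 0 \<and> \<bar>t\<bar> < \<delta> \<longrightarrow>
       (1/t^n) *\<^sub>R (\<phi> (g + X t) - (\<Sum>j\<le>n. (t ^ j / fact j) *\<^sub>R ldir_deriv_pow X j \<phi> g)) \<in> U"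
    proof (intro exI[of _ "min \<delta>0 \<delta>W"] conjI ballI allI impI)
      show "0 < min \<delta>0 \<delta>W" using A \<delta>W by simp
      fix g t assume g: "g \<in> A" and t: "t \<noteq> 0 \<and> \<bar>t\<bar> < min \<delta>0 \<delta>W"
      define F where "F = (\<lambda>j s. ldir_deriv_pow X j \<phi> (g + X s))"
      have h1: "\<forall>j<n. \<forall>s. \<bar>s\<bar> < min \<delta>0 \<delta>W \<longrightarrow> vderiv (F j) (F (Suc j) s) s"
      proof (intro allI impI)
        fix j s assume "j < n"
        then have "\<forall>h. has_ldir_deriv (ldir_deriv_pow X j \<phi>) X h (ldir_deriv_pow X (Suc j) \<phi> h)"
          using LUCn_deriv[OF \<phi> _ X] by blast
        from curve_deriv[OF X this] show "vderiv (F j) (F (Suc j) s) s" unfolding F_def .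
      qed
      have h2: "\<forall>s. \<bar>s\<bar> < min \<delta>0 \<delta>W \<longrightarrow> F n s - F n 0 \<in> D"
      proof (intro allI impI)
        fix s assume s: "\<bar>s\<bar> < min \<delta>0 \<delta>W"
        have "g \<in> V" "X s \<in> W" "g + X s \<in> V" using g s A \<delta>W by auto
        then show "F n s - F n 0 \<in> D" using W(3) by (simp add: F_def ops_zero[OF X])
      qed
      have "(1/t^n) *\<^sub>R (F 0 t - (\<Sum>j\<le>n. (t^j/fact j) *\<^sub>R F j 0)) \<in> D"
        using taylor_core[OF h1 h2 D(1,4,2)] t by blast
      then show "(1/t^n) *\<^sub>R (\<phi> (g + X t) - (\<Sum>j\<le>n. (t ^ j / fact j) *\<^sub>R ldir_deriv_pow X j \<phi> g)) \<in> U"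
        using D(3) by (auto simp: F_def ops_zero[OF X])
    qed
  qed
  then show ?thesis using A by blast
qed

lemma sum3:
  fixes a b c :: "'y::locally_convex_space"
  assumes "convex D" "D \<subseteq> {x. 3 *\<^sub>R x \<in> U}" "a \<in> D" "b \<in> D" "c \<in> D"
  shows "a + b + c \<in> U"
proof -
  have bc: "(1/2) *\<^sub>R b + (1/2) *\<^sub>R c \<in> D" by (rule convexD[OF assms(1,4,5)]) auto
  have "(1/3) *\<^sub>R a + (2/3) *\<^sub>R ((1/2) *\<^sub>R b + (1/2) *\<^sub>R c) \<in> D"
    by (rule convexD[OF assms(1,3) bc]) auto
  then have "3 *\<^sub>R ((1/3) *\<^sub>R a + (2/3) *\<^sub>R ((1/2) *\<^sub>R b + (1/2) *\<^sub>R c)) \<in> U" using assms(2) by blast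
  moreover have "3 *\<^sub>R ((1/3) *\<^sub>R a + (2/3) *\<^sub>R ((1/2) *\<^sub>R b + (1/2) *\<^sub>R c)) = a + b + c"
    by (simp add: scaleR_add_right add.assoc)
  ultimately show ?thesis by simp
qed

lemma U2:
  fixes \<phi> :: "'g::topological_group_add \<Rightarrow> 'y::locally_convex_space"
  assumes \<phi>: "\<phi> \<in> LUCn_loc n" "n \<ge> 1" and X1: "X1 \<in> one_param_subgroups" and X2: "X2 \<in> one_param_subgroups"
  shows "\<exists>V0. open V0 \<and> g0 \<in> V0 \<and> uniform_tendsto_zero_on V0
     (\<lambda>g t. (1/t) *\<^sub>R (\<phi> (g + X1 t + X2 t) - \<phi> g - t *\<^sub>R (ldir_deriv X1 \<phi> g + ldir_deriv X2 \<phi> g)))"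
proof -
  have d1: "\<forall>h. has_ldir_deriv \<phi> X1 h (ldir_deriv X1 \<phi> h)"
    using LUCn_deriv[OF \<phi>(1) _ X1, of 0] \<phi>(2) by simp
  have d2: "\<forall>h. has_ldir_deriv \<phi> X2 h (ldir_deriv X2 \<phi> h)"
    using LUCn_deriv[OF \<phi>(1) _ X2, of 0] \<phi>(2) by simp
  have "ldir_deriv X1 \<phi> \<in> LUC_loc" using LUCn_LUC[OF \<phi>(1) _ X1, of "Suc 0"] \<phi>(2) by simp
  from LUC_shift[OF this, of g0] obtain V1 where V1: "open V1" "g0 \<in> V1" and L1: "\<forall>U. open U \<and> 0 \<in> U \<longrightarrow>
    (\<exists>W. open W \<and> 0 \<in> W \<and> (\<forall>x\<in>V1. \<forall>w\<in>W. x + w \<in> V1 \<longrightarrow> ldir_deriv X1 \<phi> (x + w) - ldir_deriv X1 \<phi> x \<in> U))"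
    by blast
  have "ldir_deriv X2 \<phi> \<in> LUC_loc" using LUCn_LUC[OF \<phi>(1) _ X2, of "Suc 0"] \<phi>(2) by simp
  from LUC_shift[OF this, of g0] obtain V2 where V2: "open V2" "g0 \<in> V2" and L2: "\<forall>U. open U \<and> 0 \<in> U \<longrightarrow>
    (\<exists>W. open W \<and> 0 \<in> W \<and> (\<forall>x\<in>V2. \<forall>w\<in>W. x + w \<in> V2 \<longrightarrow> ldir_deriv X2 \<phi> (x + w) - ldir_deriv X2 \<phi> x \<in> U))"
    by blast
  have V: "open (V1 \<inter> V2)" "g0 \<in> V1 \<inter> V2" using V1 V2 by auto
  obtain A2 \<delta>2 where A2: "open A2" "g0 \<in> A2" "A2 \<subseteq> V1 \<inter> V2" "\<delta>2 > 0"
      "\<forall>g\<in>A2. \<forall>s. \<bar>s\<bar> < \<delta>2 \<longrightarrow> g + X2 s \<in> V1 \<inter> V2"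
    using shift_nbhd[OF X2 V] by blast
  obtain A1 \<delta>1 where A1: "open A1" "g0 \<in> A1" "A1 \<subseteq> A2" "\<delta>1 > 0"
      "\<forall>g\<in>A1. \<forall>s. \<bar>s\<bar> < \<delta>1 \<longrightarrow> g + X1 s \<in> A2"
    using shift_nbhd[OF X1 A2(1,2)] by blast
  have "uniform_tendsto_zero_on A1
     (\<lambda>g t. (1/t) *\<^sub>R (\<phi> (g + X1 t + X2 t) - \<phi> g - t *\<^sub>R (ldir_deriv X1 \<phi> g + ldir_deriv X2 \<phi> g)))"
    unfolding uniform_tendsto_zero_on_def
  proof (intro allI impI)
    fix U :: "'y set" assume U: "open U \<and> 0 \<in> U"
    have "open {x. (3::real) *\<^sub>R x \<in> U}" "0 \<in> {x. (3::real) *\<^sub>R x \<in> U}"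
      using open_scale_pre[of U 3] U by auto
    then obtain D where D: "open D" "0 \<in> D" "D \<subseteq> {x. (3::real) *\<^sub>R x \<in> U}" "convex D"
      by (rule convex_nbhd)
    obtain W1 where W1: "open W1" "0 \<in> W1" "\<forall>x\<in>V1. \<forall>w\<in>W1. x + w \<in> V1 \<longrightarrow> ldir_deriv X1 \<phi> (x + w) - ldir_deriv X1 \<phi> x \<in> D"
      using L1[rule_format, of D] D by blast
    obtain W2 where W2: "open W2" "0 \<in> W2" "\<forall>x\<in>V2. \<forall>w\<in>W2. x + w \<in> V2 \<longrightarrow> ldir_deriv X2 \<phi> (x + w) - ldir_deriv X2 \<phi> x \<in> D"
      using L2[rule_format, of D] D by blast
    obtain e1 where e1: "e1 > 0" "\<forall>s. \<bar>s\<bar> < e1 \<longrightarrow> X1 s \<in> W1" using small_in[OF X1 W1(1,2)] by blast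
    obtain e2 where e2: "e2 > 0" "\<forall>s. \<bar>s\<bar> < e2 \<longrightarrow> X2 s \<in> W2" using small_in[OF X2 W2(1,2)] by blast
    obtain e3 where e3: "e3 > 0" "\<forall>s. \<bar>s\<bar> < e3 \<longrightarrow> X1 s \<in> W2" using small_in[OF X1 W2(1,2)] by blast
    define \<delta> where "\<delta> = min (min \<delta>1 \<delta>2) (min e1 (min e2 e3))"
    have \<delta>: "\<delta> > 0" "\<delta> \<le> \<delta>1" "\<delta> \<le> \<delta>2" "\<delta> \<le> e1" "\<delta> \<le> e2" "\<delta> \<le> e3"
      using A1 A2 e1 e2 e3 by (auto simp: \<delta>_def)
    show "\<exists>\<delta>>0. \<forall>g\<in>A1. \<forall>t. t \<noteq> 0 \<and> \<bar>t\<bar> < \<delta> \<longrightarrow>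
       (1/t) *\<^sub>R (\<phi> (g + X1 t + X2 t) - \<phi> g - t *\<^sub>R (ldir_deriv X1 \<phi> g + ldir_deriv X2 \<phi> g)) \<in> U"
    proof (intro exI[of _ \<delta>] conjI ballI allI impI)
      show "0 < \<delta>" by fact
      fix g t assume g: "g \<in> A1" and t: "t \<noteq> 0 \<and> \<bar>t\<bar> < \<delta>"
      define h where "h = g + X1 t"
      have gV: "g \<in> A2" "g \<in> V1" "g \<in> V2" using g A1 A2 by auto
      have hA: "h \<in> A2" using A1(5) g t \<delta> unfolding h_def by auto
      have hV: "h \<in> V2" using hA A2 by auto
      have c: "(1/t) *\<^sub>R (\<phi> (g + X1 t) - \<phi> g) - ldir_deriv X1 \<phi> g \<in> D"
      proof (rule first_order[OF X1 d1 D(1,4,2) _ _], intro allI impI)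
        fix s assume s: "\<bar>s\<bar> < \<delta>"
        have "X1 s \<in> W1" "g + X1 s \<in> V1" using s \<delta> e1 A1 A2 g by auto
        then show "ldir_deriv X1 \<phi> (g + X1 s) - ldir_deriv X1 \<phi> g \<in> D" using W1(3) gV by blast
      qed (use t in auto)
      have a: "(1/t) *\<^sub>R (\<phi> (h + X2 t) - \<phi> h) - ldir_deriv X2 \<phi> h \<in> D"
      proof (rule first_order[OF X2 d2 D(1,4,2) _ _], intro allI impI)
        fix s assume s: "\<bar>s\<bar> < \<delta>"
        have "X2 s \<in> W2" "h + X2 s \<in> V2" using s \<delta> e2 A2 hA by auto
        then show "ldir_deriv X2 \<phi> (h + X2 s) - ldir_deriv X2 \<phi> h \<in> D" using W2(3) hV by blast
      qed (use t in auto)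
      have b: "ldir_deriv X2 \<phi> h - ldir_deriv X2 \<phi> g \<in> D"
      proof -
        have "X1 t \<in> W2" using t \<delta> e3 by auto
        then show ?thesis using W2(3) gV hV unfolding h_def by blast
      qed
      have "a' + b' + c' \<in> U" if "a' \<in> D" "b' \<in> D" "c' \<in> D" for a' b' c'
        using sum3[OF D(4) D(3) that] .
      then have "((1/t) *\<^sub>R (\<phi> (h + X2 t) - \<phi> h) - ldir_deriv X2 \<phi> h) + (ldir_deriv X2 \<phi> h - ldir_deriv X2 \<phi> g)
           + ((1/t) *\<^sub>R (\<phi> (g + X1 t) - \<phi> g) - ldir_deriv X1 \<phi> g) \<in> U"
        using a b c by blast
      moreover have tt: "(1/t) *\<^sub>R (t *\<^sub>R v) = v" for v :: 'y using t by simp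
      have "(1/t) *\<^sub>R (\<phi> (g + X1 t + X2 t) - \<phi> g - t *\<^sub>R (ldir_deriv X1 \<phi> g + ldir_deriv X2 \<phi> g))
          = ((1/t) *\<^sub>R (\<phi> (h + X2 t) - \<phi> h) - ldir_deriv X2 \<phi> h) + (ldir_deriv X2 \<phi> h - ldir_deriv X2 \<phi> g)
           + ((1/t) *\<^sub>R (\<phi> (g + X1 t) - \<phi> g) - ldir_deriv X1 \<phi> g)"
        unfolding scaleR_diff_right tt h_def by (simp add: algebra_simps)
      ultimately show "(1/t) *\<^sub>R (\<phi> (g + X1 t + X2 t) - \<phi> g - t *\<^sub>R (ldir_deriv X1 \<phi> g + ldir_deriv X2 \<phi> g)) \<in> U"
        by simp
    qed
  qed
  then show ?thesis using A1 by blast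
qed

theorem proposition2p2:
  fixes \<phi> :: "'g::{topological_group_add, t2_space} \<Rightarrow> 'y::locally_convex_space"
    and n :: nat
  assumes "n \<ge> 1"
    and "\<phi> \<in> LUCn_loc n"
  shows "\<exists>(\<chi>1 :: 'g \<Rightarrow> (real \<Rightarrow> 'g) \<Rightarrow> real \<Rightarrow> 'y)
           (\<chi>2 :: 'g \<Rightarrow> (real \<Rightarrow> 'g) \<Rightarrow> (real \<Rightarrow> 'g) \<Rightarrow> real \<Rightarrow> 'y).
     (\<forall>g X t. X \<in> one_param_subgroups \<longrightarrow>
        \<phi> (g + X t) = (\<Sum>j\<le>n. (t ^ j / fact j) *\<^sub>R ldir_deriv_pow X j \<phi> g) + t ^ n *\<^sub>R \<chi>1 g X t)
   \<and> (\<forall>g X. X \<in> one_param_subgroups \<longrightarrow> (\<chi>1 g X \<longlongrightarrow> 0) (at 0))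
   \<and> (\<forall>g X1 X2 t. X1 \<in> one_param_subgroups \<and> X2 \<in> one_param_subgroups \<longrightarrow>
        \<phi> (g + X1 t + X2 t) = \<phi> g + t *\<^sub>R (ldir_deriv X1 \<phi> g + ldir_deriv X2 \<phi> g)
                               + t *\<^sub>R \<chi>2 g X1 X2 t)
   \<and> (\<forall>g X1 X2. X1 \<in> one_param_subgroups \<and> X2 \<in> one_param_subgroups \<longrightarrow>
        (\<chi>2 g X1 X2 \<longlongrightarrow> 0) (at 0))
   \<and> (\<forall>g0 X X1 X2. X \<in> one_param_subgroups \<and> X1 \<in> one_param_subgroups \<and>
        X2 \<in> one_param_subgroups \<longrightarrow>
        (\<exists>V0. open V0 \<and> g0 \<in> V0 \<and>
           uniform_tendsto_zero_on V0 (\<lambda>g t. \<chi>1 g X t) \<and>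
           uniform_tendsto_zero_on V0 (\<lambda>g t. \<chi>2 g X1 X2 t)))"
proof -
  note n = assms(1) and \<phi> = assms(2)
  define \<chi>1 :: "'g \<Rightarrow> (real \<Rightarrow> 'g) \<Rightarrow> real \<Rightarrow> 'y" where
    "\<chi>1 = (\<lambda>g X t. (1/t^n) *\<^sub>R (\<phi> (g + X t) - (\<Sum>j\<le>n. (t ^ j / fact j) *\<^sub>R ldir_deriv_pow X j \<phi> g)))"
  define \<chi>2 :: "'g \<Rightarrow> (real \<Rightarrow> 'g) \<Rightarrow> (real \<Rightarrow> 'g) \<Rightarrow> real \<Rightarrow> 'y" where
    "\<chi>2 = (\<lambda>g X1 X2 t. (1/t) *\<^sub>R (\<phi> (g + X1 t + X2 t) - \<phi> g - t *\<^sub>R (ldir_deriv X1 \<phi> g + ldir_deriv X2 \<phi> g)))"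
  have E1: "\<forall>g X t. X \<in> one_param_subgroups \<longrightarrow>
        \<phi> (g + X t) = (\<Sum>j\<le>n. (t ^ j / fact j) *\<^sub>R ldir_deriv_pow X j \<phi> g) + t ^ n *\<^sub>R \<chi>1 g X t"
  proof (intro allI impI)
    fix g :: 'g and X :: "real \<Rightarrow> 'g" and t :: real assume X: "X \<in> one_param_subgroups"
    show "\<phi> (g + X t) = (\<Sum>j\<le>n. (t ^ j / fact j) *\<^sub>R ldir_deriv_pow X j \<phi> g) + t ^ n *\<^sub>R \<chi>1 g X t"
    proof (cases "t = 0")
      case True
      have "(\<Sum>j\<le>n. ((0::real) ^ j / fact j) *\<^sub>R ldir_deriv_pow X j \<phi> g) = ldir_deriv_pow X 0 \<phi> g"
        by (rule sum_zero_eval)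
      then show ?thesis using True n by (simp add: ops_zero[OF X])
    next
      case False
      then have "t ^ n *\<^sub>R \<chi>1 g X t = \<phi> (g + X t) - (\<Sum>j\<le>n. (t ^ j / fact j) *\<^sub>R ldir_deriv_pow X j \<phi> g)"
        by (simp add: \<chi>1_def)
      then show ?thesis by simp
    qed
  qed
  have E2: "\<forall>g X1 X2 t. X1 \<in> one_param_subgroups \<and> X2 \<in> one_param_subgroups \<longrightarrow>
        \<phi> (g + X1 t + X2 t) = \<phi> g + t *\<^sub>R (ldir_deriv X1 \<phi> g + ldir_deriv X2 \<phi> g)
                               + t *\<^sub>R \<chi>2 g X1 X2 t"
  proof (intro allI impI)
    fix g :: 'g and X1 X2 :: "real \<Rightarrow> 'g" and t :: real assume X: "X1 \<in> one_param_subgroups \<and> X2 \<in> one_param_subgroups"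
    show "\<phi> (g + X1 t + X2 t) = \<phi> g + t *\<^sub>R (ldir_deriv X1 \<phi> g + ldir_deriv X2 \<phi> g)
                               + t *\<^sub>R \<chi>2 g X1 X2 t"
    proof (cases "t = 0")
      case True
      then show ?thesis using X by (simp add: ops_zero)
    next
      case False
      then have "t *\<^sub>R \<chi>2 g X1 X2 t = \<phi> (g + X1 t + X2 t) - \<phi> g - t *\<^sub>R (ldir_deriv X1 \<phi> g + ldir_deriv X2 \<phi> g)"
        by (simp add: \<chi>2_def)
      then show ?thesis by simp
    qed
  qed
  have U1': "\<exists>V0. open V0 \<and> g0 \<in> V0 \<and> uniform_tendsto_zero_on V0 (\<lambda>g t. \<chi>1 g X t)"
    if "X \<in> one_param_subgroups" for g0 :: 'g and X :: "real \<Rightarrow> 'g"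
    using U1[OF \<phi> that, of g0] unfolding \<chi>1_def by simp
  have U2': "\<exists>V0. open V0 \<and> g0 \<in> V0 \<and> uniform_tendsto_zero_on V0 (\<lambda>g t. \<chi>2 g X1 X2 t)"
    if "X1 \<in> one_param_subgroups" "X2 \<in> one_param_subgroups" for g0 :: 'g and X1 X2 :: "real \<Rightarrow> 'g"
    using U2[OF \<phi> n that, of g0] unfolding \<chi>2_def by simp
  have L1: "\<forall>g X. X \<in> one_param_subgroups \<longrightarrow> (\<chi>1 g X \<longlongrightarrow> 0) (at 0)"
  proof (intro allI impI)
    fix g :: 'g and X :: "real \<Rightarrow> 'g" assume "X \<in> one_param_subgroups"
    from U1'[OF this, of g] obtain V0 where "g \<in> V0" "uniform_tendsto_zero_on V0 (\<lambda>g t. \<chi>1 g X t)" by blast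
    from unif_tendsto[OF this(2) this(1)] show "(\<chi>1 g X \<longlongrightarrow> 0) (at 0)" by simp
  qed
  have L2: "\<forall>g X1 X2. X1 \<in> one_param_subgroups \<and> X2 \<in> one_param_subgroups \<longrightarrow>
        (\<chi>2 g X1 X2 \<longlongrightarrow> 0) (at 0)"
  proof (intro allI impI)
    fix g :: 'g and X1 X2 :: "real \<Rightarrow> 'g" assume X: "X1 \<in> one_param_subgroups \<and> X2 \<in> one_param_subgroups"
    from U2'[of X1 X2 g] X obtain V0 where "g \<in> V0" "uniform_tendsto_zero_on V0 (\<lambda>g t. \<chi>2 g X1 X2 t)" by blast
    from unif_tendsto[OF this(2) this(1)] show "(\<chi>2 g X1 X2 \<longlongrightarrow> 0) (at 0)" by simp
  qed
  have L3: "\<forall>g0 X X1 X2. X \<in> one_param_subgroups \<and> X1 \<in> one_param_subgroups \<and>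
        X2 \<in> one_param_subgroups \<longrightarrow>
        (\<exists>V0. open V0 \<and> g0 \<in> V0 \<and>
           uniform_tendsto_zero_on V0 (\<lambda>g t. \<chi>1 g X t) \<and>
           uniform_tendsto_zero_on V0 (\<lambda>g t. \<chi>2 g X1 X2 t))"
  proof (intro allI impI)
    fix g0 :: 'g and X X1 X2 :: "real \<Rightarrow> 'g" assume X: "X \<in> one_param_subgroups \<and> X1 \<in> one_param_subgroups \<and> X2 \<in> one_param_subgroups"
    obtain Va where Va: "open Va" "g0 \<in> Va" "uniform_tendsto_zero_on Va (\<lambda>g t. \<chi>1 g X t)"
      using U1'[of X g0] X by blast
    obtain Vb where Vb: "open Vb" "g0 \<in> Vb" "uniform_tendsto_zero_on Vb (\<lambda>g t. \<chi>2 g X1 X2 t)"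
      using U2'[of X1 X2 g0] X by blast
    show "\<exists>V0. open V0 \<and> g0 \<in> V0 \<and>
           uniform_tendsto_zero_on V0 (\<lambda>g t. \<chi>1 g X t) \<and>
           uniform_tendsto_zero_on V0 (\<lambda>g t. \<chi>2 g X1 X2 t)"
      by (rule exI[of _ "Va \<inter> Vb"])
         (use Va Vb unif_mono[OF Va(3), of "Va \<inter> Vb"] unif_mono[OF Vb(3), of "Va \<inter> Vb"] in auto)
  qed
  show ?thesis
    by (rule exI[of _ \<chi>1], rule exI[of _ \<chi>2]) (intro conjI E1 L1 E2 L2 L3)
qed

end
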